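(* Let $\mathbf z,\mathbf w$ be jointly distributed $M$-dimensional random vectors whose components have finite positive variance, with standardized versions $\mathbf z',\mathbf w'$, and assume $\boldsymbol\Sigma_{\mathbf z'\mathbf z'}$ and $\boldsymbol\Sigma_{\mathbf z'\mathbf w'}$ are full rank. Then $$m_{\mathrm{SVD}}(\mathbf z,\mathbf w)\ \ge\ 1-\sqrt{M\sum_{l=1}^M\mathrm{Var}[z'_l-w'_l]},$$ where the variance is over the joint distribution of $(\mathbf z',\mathbf w')$.
   Context: For $M$-dimensional random vectors $\mathbf z,\mathbf w$ (jointly distributed, components with finite positive variance), let $\mathbf z',\mathbf w'$ be the standardized vectors $z'_i=(z_i-\mathbb E[z_i])/\operatorname{std}(z_i)$, $w'_i=(w_i-\mathbb E[w_i])/\operatorname{std}(w_i)$, and let $\boldsymbol\Sigma_{\mathbf z'\mathbf w'}$ be the cross-covariance matrix with entries $\mathrm{Cov}[z'_i,w'_j]$ (and $\boldsymbol\Sigma_{\mathbf z'\mathbf z'}$ the covariance matrix of $\mathbf z'$). Let $\{\mathbf u_i\}_{i=1}^M$, $\{\mathbf v_i\}_{i=1}^M$ be the left and right singular vectors of $\boldsymbol\Sigma_{\mathbf z'\mathbf w'}$. Define $m_{\mathrm{SVD}}(\mathbf z,\mathbf w)=\frac1M\sum_{i=1}^M\mathrm{Cov}[\mathbf u_i^\top\mathbf z',\mathbf v_i^\top\mathbf w']$ (equivalently, $\frac1M$ times the sum of the singular values of $\boldsymbol\Sigma_{\mathbf z'\mathbf w'}$) and $d_{\mathrm{SVD}}(\mathbf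 z,\mathbf w)=1-m_{\mathrm{SVD}}(\mathbf z,\mathbf w)$. *)

theory Defs
  imports "HOL-Probability.Probability"
begin

definition mean :: "'a measure \<Rightarrow> ('a \<Rightarrow> real) \<Rightarrow> real" where
  "mean p X = integral\<^sup>L p X"

definition cov :: "'a measure \<Rightarrow> ('a \<Rightarrow> real) \<Rightarrow> ('a \<Rightarrow> real) \<Rightarrow> real" where
  "cov p X Y = integral\<^sup>L p (\<lambda>\<omega>. (X \<omega> - mean p X) * (Y \<omega> - mean p Y))"

definition var :: "'a measure \<Rightarrow> ('a \<Rightarrow> real) \<Rightarrow> real" where
  "var p X = cov p X X"

definition standardize :: "'a measure \<Rightarrow> ('a \<Rightarrow> real^'n) \<Rightarrow> 'a \<Rightarrow> real^'n" where
  "standardize p z = (\<lambda>\<omega>. \<chi> i. (z \<omega> $ i - mean p (\<lambda>\<eta>. z \<eta> $ i)) / sqrt (var p (\<lambda>\<eta>. z \<eta> $ i)))"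

definition cross_cov :: "'a measure \<Rightarrow> ('a \<Rightarrow> real^'n) \<Rightarrow> ('a \<Rightarrow> real^'n) \<Rightarrow> real^'n^'n" where
  "cross_cov p x y = (\<chi> i j. cov p (\<lambda>\<omega>. x \<omega> $ i) (\<lambda>\<omega>. y \<omega> $ j))"

definition diag_mat :: "real^'n \<Rightarrow> real^'n^'n" where
  "diag_mat s = (\<chi> i j. if i = j then s $ i else 0)"

definition is_svd :: "real^'n^'n \<Rightarrow> real^'n^'n \<Rightarrow> real^'n \<Rightarrow> real^'n^'n \<Rightarrow> bool" where
  "is_svd A U s V \<longleftrightarrow> orthogonal_matrix U \<and> orthogonal_matrix V \<and> (\<forall>i. 0 \<le> s $ i)
     \<and> A = U ** diag_mat s ** transpose V"

definition m_SVD :: "'a measure \<Rightarrow> ('a \<Rightarrow> real^'n) \<Rightarrow> ('a \<Rightarrow> real^'n) \<Rightarrow> real" where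
  "m_SVD p z w =
    (let z' = standardize p z; w' = standardize p w;
         (U, V) = (SOME (U, V). \<exists>s. is_svd (cross_cov p z' w') U s V)
     in (1 / real CARD('n)) *
        (\<Sum>i\<in>UNIV. cov p (\<lambda>\<omega>. column i U \<bullet> z' \<omega>) (\<lambda>\<omega>. column i V \<bullet> w' \<omega>)))"

definition d_SVD :: "'a measure \<Rightarrow> ('a \<Rightarrow> real^'n) \<Rightarrow> ('a \<Rightarrow> real^'n) \<Rightarrow> real" where
  "d_SVD p z w = 1 - m_SVD p z w"

end

theory Submission
  imports Defs
begin

lemma orth_row_norm: "orthogonal_matrix (U::real^'n^'n) \<Longrightarrow> norm (U $ i) = 1"
  using orthogonal_matrix_orthonormal_rows[of U] by (simp add: row_def vec_nth_inverse)

lemma compact_orth: "compact {U::real^'n^'n. orthogonal_matrix U}"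
proof (rule compact_eq_bounded_closed[THEN iffD2], rule conjI)
  show "bounded {U::real^'n^'n. orthogonal_matrix U}"
    unfolding bounded_iff
  proof (rule exI[of _ "sqrt (real CARD('n))"], intro ballI)
    fix U :: "real^'n^'n" assume "U \<in> {U. orthogonal_matrix U}"
    then have "\<And>i. norm (U $ i) = 1" using orth_row_norm by auto
    then show "norm U \<le> sqrt (real CARD('n))"
      unfolding norm_vec_def[of U] L2_set_def by simp
  qed
  have "continuous_on UNIV (\<lambda>U::real^'n^'n. transpose U ** U)"
    unfolding matrix_matrix_mult_def transpose_def
    by (intro continuous_intros)
  then have "closed {U::real^'n^'n. transpose U ** U = mat 1}"
    by (intro closed_Collect_eq) (auto intro: continuous_intros)
  then show "closed {U::real^'n^'n. orthogonal_matrix U}"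
    by (simp add: orthogonal_matrix)
qed

definition objf :: "('n \<Rightarrow> real) \<Rightarrow> real^'n^'n \<Rightarrow> real^'n^'n \<Rightarrow> real^'n^'n \<Rightarrow> real" where
  "objf w A U V = (\<Sum>k\<in>UNIV. w k * (transpose U ** A ** V) $ k $ k)"

definition rotc :: "'n \<Rightarrow> 'n \<Rightarrow> real \<Rightarrow> real \<Rightarrow> 'n \<Rightarrow> real^'n" where
  "rotc i j c s b = (if b = i then c *\<^sub>R axis i 1 + s *\<^sub>R axis j 1
      else if b = j then (-s) *\<^sub>R axis i 1 + c *\<^sub>R axis j 1 else axis b 1)"

definition rotm :: "'n \<Rightarrow> 'n \<Rightarrow> real \<Rightarrow> real \<Rightarrow> real^'n^'n" where
  "rotm i j c s = (\<chi> a b. rotc i j c s b $ a)"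

lemma rotm_orth:
  assumes "i \<noteq> j" "c\<^sup>2 + s\<^sup>2 = 1"
  shows "orthogonal_matrix (rotm i j c s)"
proof -
  have col: "column b (rotm i j c s) = rotc i j c s b" for b
    by (simp add: column_def rotm_def vec_nth_inverse)
  have n: "norm (rotc i j c s b) = 1" for b
    using assms unfolding norm_eq_1 rotc_def
    by (auto simp: inner_add_left inner_add_right inner_axis_axis inner_diff_left inner_diff_right power2_eq_square)
  have o: "orthogonal (rotc i j c s a) (rotc i j c s b)" if "a \<noteq> b" for a b
    using assms that unfolding orthogonal_def rotc_def
    by (auto simp: inner_add_left inner_add_right inner_axis_axis algebra_simps)
  show ?thesis unfolding orthogonal_matrix_orthonormal_columns col using n o by auto
qed

lemma mult_if0: "(x::real) * (if P then y else 0) = (if P then x*y else 0)"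
  "(if P then y else 0) * x = (if P then y*x else 0)" by auto

lemma rotm_entry:
  assumes "i \<noteq> j"
  shows "(transpose (rotm i j c s) ** B) $ k $ k =
     B $ k $ k + (if k = i then (c - 1) * B$i$i + s * B$j$i else 0)
       + (if k = j then (c - 1) * B$j$j - s * B$i$j else 0)"
  using assms
  using assms
  by (auto simp: matrix_matrix_mult_def transpose_def rotm_def rotc_def axis_def
      mult_if0 sum.distrib sum_subtractf sum.delta algebra_simps)

definition refm :: "'n \<Rightarrow> real^'n^'n" where
  "refm i = (\<chi> a b. if b = i then - axis i 1 $ a else axis b 1 $ a)"

lemma refm_orth: "orthogonal_matrix (refm i)"
proof -
  have col: "column b (refm i) = (if b = i then - axis i 1 else axis b 1)" for b
    by (simp add: column_def refm_def vec_nth_inverse vec_eq_iff)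
  show ?thesis unfolding orthogonal_matrix_orthonormal_columns col
    by (auto simp: orthogonal_def inner_axis_axis)
qed

lemma refm_entry:
  shows "(transpose (refm i) ** B) $ k $ k = B $ k $ k + (if k = i then - 2 * B$i$i else 0)"
  by (auto simp: matrix_matrix_mult_def transpose_def refm_def axis_def
      mult_if0 sum.distrib sum_subtractf sum.delta sum_negf algebra_simps)

lemma objf_left:
  "objf w A (U ** G) V = (\<Sum>k\<in>UNIV. w k * (transpose G ** (transpose U ** A ** V)) $ k $ k)"
  unfolding objf_def by (simp add: matrix_transpose_mul matrix_mul_assoc)

lemma objf_transpose: "objf w (transpose A) V U = objf w A U V"
proof -
  have "transpose V ** transpose A ** U = transpose (transpose U ** A ** V)"
    by (simp add: matrix_transpose_mul matrix_mul_assoc)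
  then show ?thesis unfolding objf_def by (simp add: transpose_def)
qed

lemma max_offdiag:
  assumes U: "orthogonal_matrix U" and V: "orthogonal_matrix V"
    and mx: "\<And>U' V'. orthogonal_matrix U' \<Longrightarrow> orthogonal_matrix V' \<Longrightarrow> objf w A U' V' \<le> objf w A U V"
    and ij: "i \<noteq> j"
  shows "w i * (transpose U ** A ** V) $ j $ i = w j * (transpose U ** A ** V) $ i $ j"
proof -
  define B where "B = transpose U ** A ** V"
  define \<alpha> where "\<alpha> = w i * B$i$i + w j * B$j$j"
  define \<beta> where "\<beta> = w i * B$j$i - w j * B$i$j"
  have key: "c * \<alpha> + s * \<beta> \<le> \<alpha>" if cs: "c\<^sup>2 + s\<^sup>2 = 1" for c s
  proof -
    have "objf w A (U ** rotm i j c s) V \<le> objf w A U V"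
      by (rule mx) (auto intro: orthogonal_matrix_mul[OF U rotm_orth[OF ij cs]] V)
    moreover have "objf w A (U ** rotm i j c s) V = objf w A U V + ((c - 1) * \<alpha> + s * \<beta>)"
      unfolding objf_left rotm_entry[OF ij] using ij
      by (simp add: objf_def B_def[symmetric] \<alpha>_def \<beta>_def distrib_left sum.distrib mult_if0
          sum.delta algebra_simps)
    ultimately show ?thesis by (simp add: algebra_simps)
  qed
  show ?thesis
  proof (rule ccontr)
    assume "\<not> ?thesis"
    then have b: "\<beta> \<noteq> 0" unfolding \<beta>_def B_def by simp
    define r where "r = sqrt (\<alpha>\<^sup>2 + \<beta>\<^sup>2)"
    have rp: "r > 0" unfolding r_def using b by (simp add: sum_power2_gt_zero_iff)
    have r2: "r\<^sup>2 = \<alpha>\<^sup>2 + \<beta>\<^sup>2" unfolding r_def by simp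
    have "(\<alpha>/r)\<^sup>2 + (\<beta>/r)\<^sup>2 = 1" using rp r2 b by (simp add: power_divide add_divide_distrib[symmetric])
    from key[OF this] have "(\<alpha>\<^sup>2 + \<beta>\<^sup>2) / r \<le> \<alpha>" by (simp add: power2_eq_square add_divide_distrib)
    moreover have "(\<alpha>\<^sup>2 + \<beta>\<^sup>2) / r = r" unfolding r2[symmetric] using rp by (simp add: power2_eq_square)
    ultimately have "r \<le> \<alpha>" by simp
    then have "r\<^sup>2 \<le> \<alpha>\<^sup>2" using rp by (intro power_mono) auto
    then show False using r2 b by simp
  qed
qed

lemma max_diag_nonneg:
  assumes U: "orthogonal_matrix U" and V: "orthogonal_matrix V"
    and mx: "\<And>U' V'. orthogonal_matrix U' \<Longrightarrow> orthogonal_matrix V' \<Longrightarrow> objf w A U' V' \<le> objf w A U V"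
    and wp: "w i > 0"
  shows "(transpose U ** A ** V) $ i $ i \<ge> 0"
proof -
  define B where "B = transpose U ** A ** V"
  have "objf w A (U ** refm i) V \<le> objf w A U V"
    by (rule mx) (auto intro: orthogonal_matrix_mul U V refm_orth)
  moreover have "objf w A (U ** refm i) V = objf w A U V - 2 * w i * B$i$i"
    unfolding objf_left refm_entry
    by (simp add: objf_def B_def[symmetric] distrib_left sum.distrib mult_if0
          sum.delta algebra_simps)
  ultimately have "0 \<le> w i * B$i$i" by simp
  then show ?thesis using wp unfolding B_def by (simp add: zero_le_mult_iff)
qed

lemma svd_exists: fixes A :: "real^'n^'n" shows "\<exists>U s V. is_svd A U s V"
proof -
  obtain f :: "'n \<Rightarrow> nat" and n where "f ` UNIV = {i. i < n}" "inj_on f UNIV"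
    using finite_imp_inj_to_nat_seg[of "UNIV :: 'n set"] by auto
  then have finj: "f i = f j \<Longrightarrow> i = j" for i j by (auto simp: inj_on_def)
  define w where "w k = real (f k) + 1" for k
  have wpos: "w k > 0" for k unfolding w_def by simp
  have winj: "w i = w j \<Longrightarrow> i = j" for i j unfolding w_def using finj by simp
  define S where "S = {U::real^'n^'n. orthogonal_matrix U} \<times> {V::real^'n^'n. orthogonal_matrix V}"
  have cS: "compact S" unfolding S_def by (intro compact_Times compact_orth)
  have neS: "S \<noteq> {}" unfolding S_def using orthogonal_matrix_id by blast
  have cont: "continuous_on S (\<lambda>x. objf w A (fst x) (snd x))"
    unfolding objf_def matrix_matrix_mult_def transpose_def
    by (intro continuous_intros)
  obtain x where xS: "x \<in> S" and xmax: "\<And>y. y \<in> S \<Longrightarrow> objf w A (fst y) (snd y) \<le> objf w A (fst x) (snd x)"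
    using continuous_attains_sup[OF cS neS cont] by blast
  obtain U V where x: "x = (U, V)" by (cases x)
  have U: "orthogonal_matrix U" and V: "orthogonal_matrix V" using xS x S_def by auto
  have mx: "\<And>U' V'. orthogonal_matrix U' \<Longrightarrow> orthogonal_matrix V' \<Longrightarrow> objf w A U' V' \<le> objf w A U V"
    using xmax x unfolding S_def by force
  have mx2: "\<And>U' V'. orthogonal_matrix U' \<Longrightarrow> orthogonal_matrix V' \<Longrightarrow> objf w (transpose A) U' V' \<le> objf w (transpose A) V U"
    unfolding objf_transpose using mx by (metis objf_transpose transpose_transpose)
  define B where "B = transpose U ** A ** V"
  have BT: "transpose V ** transpose A ** U = transpose B"
    unfolding B_def by (simp add: matrix_transpose_mul matrix_mul_assoc)
  have off: "B $ j $ i = 0" if ij: "i \<noteq> j" for i j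
  proof -
    have e1: "w i * B $ j $ i = w j * B $ i $ j"
      using max_offdiag[OF U V mx ij] unfolding B_def .
    have e2: "w i * B $ i $ j = w j * B $ j $ i"
      using max_offdiag[OF V U mx2 ij] unfolding BT by (simp add: transpose_def)
    have "w i * (w i * B $ j $ i) = w j * (w j * B $ j $ i)"
      using e1 e2 by (metis mult.left_commute)
    then have "(w i - w j) * (w i + w j) * B $ j $ i = 0" by (simp add: algebra_simps)
    moreover have "w i - w j \<noteq> 0" using winj ij by auto
    moreover have "w i + w j \<noteq> 0" using wpos[of i] wpos[of j] by simp
    ultimately show ?thesis by simp
  qed
  have dg: "B $ i $ i \<ge> 0" for i
    using max_diag_nonneg[OF U V mx wpos] unfolding B_def .
  define s where "s = (\<chi> i. B $ i $ i)"
  have Bd: "B = diag_mat s"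
    unfolding diag_mat_def s_def vec_eq_iff using off by auto
  have "U ** B ** transpose V = (U ** transpose U) ** A ** (V ** transpose V)"
    unfolding B_def by (simp add: matrix_mul_assoc)
  also have "\<dots> = A" using U V by (simp add: orthogonal_matrix_def)
  finally have "A = U ** diag_mat s ** transpose V" using Bd by simp
  then have "is_svd A U s V" unfolding is_svd_def using U V dg s_def by simp
  then show ?thesis by blast
qed

definition L2rv :: "'a measure \<Rightarrow> ('a \<Rightarrow> real) \<Rightarrow> bool" where
  "L2rv M X \<longleftrightarrow> X \<in> borel_measurable M \<and> integrable M (\<lambda>\<omega>. (X \<omega>)\<^sup>2)"

lemma abs_mult_le_sq: "\<bar>x * y\<bar> \<le> x\<^sup>2 + (y::real)\<^sup>2"
proof -
  have "0 \<le> (\<bar>x\<bar> - \<bar>y\<bar>)\<^sup>2" by simp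
  then have "2 * (\<bar>x\<bar> * \<bar>y\<bar>) \<le> \<bar>x\<bar>\<^sup>2 + \<bar>y\<bar>\<^sup>2" by (simp add: power2_eq_square algebra_simps)
  moreover have "0 \<le> \<bar>x\<bar> * \<bar>y\<bar>" by simp
  ultimately show ?thesis unfolding abs_mult using power2_abs[of x] power2_abs[of y] by linarith
qed

context prob_space begin

lemma L2_integrable: "L2rv M X \<Longrightarrow> integrable M X"
  unfolding L2rv_def by (auto intro: square_integrable_imp_integrable)

lemma L2_mult: assumes "L2rv M X" "L2rv M Y" shows "integrable M (\<lambda>\<omega>. X \<omega> * Y \<omega>)"
proof (rule Bochner_Integration.integrable_bound)
  show "integrable M (\<lambda>\<omega>. (X \<omega>)\<^sup>2 + (Y \<omega>)\<^sup>2)" using assms unfolding L2rv_def by auto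
  show "(\<lambda>\<omega>. X \<omega> * Y \<omega>) \<in> borel_measurable M" using assms unfolding L2rv_def by auto
  show "AE \<omega> in M. norm (X \<omega> * Y \<omega>) \<le> norm ((X \<omega>)\<^sup>2 + (Y \<omega>)\<^sup>2)"
    using abs_mult_le_sq by auto
qed

lemma L2_affine: assumes "L2rv M X" shows "L2rv M (\<lambda>\<omega>. a * X \<omega> + b)"
proof -
  have i: "integrable M X" using L2_integrable[OF assms] .
  have "(\<lambda>\<omega>. (a * X \<omega> + b)\<^sup>2) = (\<lambda>\<omega>. a\<^sup>2 * (X \<omega>)\<^sup>2 + (2*a*b) * X \<omega> + b\<^sup>2)"
    by (auto simp: power2_eq_square algebra_simps)
  moreover have "integrable M \<dots>" using assms i unfolding L2rv_def by auto
  ultimately show ?thesis using assms unfolding L2rv_def by auto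
qed

lemma L2_diff: assumes "L2rv M X" "L2rv M Y" shows "L2rv M (\<lambda>\<omega>. X \<omega> - Y \<omega>)"
proof -
  have "(\<lambda>\<omega>. (X \<omega> - Y \<omega>)\<^sup>2) = (\<lambda>\<omega>. (X \<omega>)\<^sup>2 - 2 * (X \<omega> * Y \<omega>) + (Y \<omega>)\<^sup>2)"
    by (auto simp: power2_eq_square algebra_simps)
  moreover have "integrable M \<dots>" using assms L2_mult[OF assms] unfolding L2rv_def by auto
  ultimately show ?thesis using assms unfolding L2rv_def by auto
qed

lemma mean_sum: assumes "finite I" "\<And>i. i \<in> I \<Longrightarrow> L2rv M (X i)"
  shows "mean M (\<lambda>\<omega>. \<Sum>i\<in>I. a i * X i \<omega>) = (\<Sum>i\<in>I. a i * mean M (X i))"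
proof -
  have "integral\<^sup>L M (\<lambda>\<omega>. \<Sum>i\<in>I. a i * X i \<omega>) = (\<Sum>i\<in>I. integral\<^sup>L M (\<lambda>\<omega>. a i * X i \<omega>))"
    by (rule Bochner_Integration.integral_sum[where f="\<lambda>i \<omega>. a i * X i \<omega>"]) (auto intro: L2_integrable assms)
  then show ?thesis unfolding mean_def by simp
qed

lemma cov_sum:
  assumes "finite I" "finite J" "\<And>i. i \<in> I \<Longrightarrow> L2rv M (X i)" "\<And>j. j \<in> J \<Longrightarrow> L2rv M (Y j)"
  shows "cov M (\<lambda>\<omega>. \<Sum>i\<in>I. a i * X i \<omega>) (\<lambda>\<omega>. \<Sum>j\<in>J. b j * Y j \<omega>)
       = (\<Sum>i\<in>I. \<Sum>j\<in>J. a i * b j * cov M (X i) (Y j))"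
proof -
  define Xc where "Xc i \<omega> = X i \<omega> - mean M (X i)" for i \<omega>
  define Yc where "Yc j \<omega> = Y j \<omega> - mean M (Y j)" for j \<omega>
  have LX: "L2rv M (Xc i)" if "i \<in> I" for i
    using L2_affine[OF assms(3)[OF that], of 1 "- mean M (X i)"] unfolding Xc_def by simp
  have LY: "L2rv M (Yc j)" if "j \<in> J" for j
    using L2_affine[OF assms(4)[OF that], of 1 "- mean M (Y j)"] unfolding Yc_def by simp
  have e1: "(\<Sum>i\<in>I. a i * X i \<omega>) - (\<Sum>i\<in>I. a i * mean M (X i)) = (\<Sum>i\<in>I. a i * Xc i \<omega>)" for \<omega>
    by (simp add: Xc_def sum_subtractf[symmetric] right_diff_distrib)
  have e2: "(\<Sum>j\<in>J. b j * Y j \<omega>) - (\<Sum>j\<in>J. b j * mean M (Y j)) = (\<Sum>j\<in>J. b j * Yc j \<omega>)" for \<omega>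
    by (simp add: Yc_def sum_subtractf[symmetric] right_diff_distrib)
  have "(\<lambda>\<omega>. ((\<Sum>i\<in>I. a i * X i \<omega>) - mean M (\<lambda>\<omega>. \<Sum>i\<in>I. a i * X i \<omega>)) *
            ((\<Sum>j\<in>J. b j * Y j \<omega>) - mean M (\<lambda>\<omega>. \<Sum>j\<in>J. b j * Y j \<omega>)))
     = (\<lambda>\<omega>. \<Sum>i\<in>I. \<Sum>j\<in>J. a i * b j * (Xc i \<omega> * Yc j \<omega>))"
  proof -
    have m1: "mean M (\<lambda>\<omega>. \<Sum>i\<in>I. a i * X i \<omega>) = (\<Sum>i\<in>I. a i * mean M (X i))"
      by (rule mean_sum[OF assms(1,3)])
    have m2: "mean M (\<lambda>\<omega>. \<Sum>j\<in>J. b j * Y j \<omega>) = (\<Sum>j\<in>J. b j * mean M (Y j))"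
      by (rule mean_sum[OF assms(2,4)])
    show ?thesis unfolding m1 m2 e1 e2 by (simp add: sum_product mult_ac)
  qed
  then show ?thesis
    unfolding cov_def
    using assms(1,2) LX LY L2_mult
    by (simp add: Xc_def[symmetric] Yc_def[symmetric] Bochner_Integration.integral_sum)
qed

lemma cov_affine:
  assumes "L2rv M X" "L2rv M Y"
  shows "cov M (\<lambda>\<omega>. a * X \<omega> + b) (\<lambda>\<omega>. c * Y \<omega> + d) = a * c * cov M X Y"
proof -
  have m: "mean M (\<lambda>\<omega>. a * Z \<omega> + e) = a * mean M Z + e" if "L2rv M Z" for Z e a
    unfolding mean_def using L2_integrable[OF that] by (simp add: prob_space)
  have "(\<lambda>\<omega>. (a * X \<omega> + b - (a * mean M X + b)) * (c * Y \<omega> + d - (c * mean M Y + d)))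
     = (\<lambda>\<omega>. (a * c) * ((X \<omega> - mean M X) * (Y \<omega> - mean M Y)))"
    by (auto simp: algebra_simps)
  then show ?thesis unfolding cov_def m[OF assms(1)] m[OF assms(2)] by simp
qed

lemma cov_sym: "cov M X Y = cov M Y X"
  unfolding cov_def by (simp add: mult.commute)

lemma var_diff:
  assumes "L2rv M X" "L2rv M Y"
  shows "var M (\<lambda>\<omega>. X \<omega> - Y \<omega>) = var M X + var M Y - 2 * cov M X Y"
proof -
  define Z where "Z b = (if b then X else Y)" for b
  define a where "a b = (if b then 1 else (-1::real))" for b
  have "(\<lambda>\<omega>. X \<omega> - Y \<omega>) = (\<lambda>\<omega>. \<Sum>b\<in>UNIV. a b * Z b \<omega>)"
    by (simp add: UNIV_bool a_def Z_def)
  then have "var M (\<lambda>\<omega>. X \<omega> - Y \<omega>) = (\<Sum>i\<in>UNIV. \<Sum>j\<in>UNIV. a i * a j * cov M (Z i) (Z j))"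
    unfolding var_def using assms by (simp only:) (rule cov_sum, auto simp: Z_def)
  then show ?thesis using cov_sym[of Y X] by (simp add: UNIV_bool a_def Z_def var_def)
qed

lemma var_nonneg: "var M X \<ge> 0"
  unfolding var_def cov_def by (rule integral_nonneg_AE) auto

end

lemma diag_entry: "(U ** diag_mat s ** transpose V) $ a $ b = (\<Sum>k\<in>UNIV. U$a$k * s$k * V$b$k)"
  by (simp add: matrix_matrix_mult_def diag_mat_def transpose_def mult_if0 sum.delta
      sum_distrib_right mult_ac if_distrib cong: if_cong)

lemma quad_entry: "(transpose U ** S ** V) $ i $ i = (\<Sum>n\<in>UNIV. \<Sum>k\<in>UNIV. U$n$i * (S$n$k * V$k$i))"
proof -
  have "(transpose U ** S ** V) $ i $ i = (\<Sum>k\<in>UNIV. \<Sum>n\<in>UNIV. U$n$i * (S$n$k * V$k$i))"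
    by (simp add: matrix_matrix_mult_def transpose_def sum_distrib_right mult_ac)
  also have "\<dots> = (\<Sum>n\<in>UNIV. \<Sum>k\<in>UNIV. U$n$i * (S$n$k * V$k$i))" by (rule sum.swap)
  finally show ?thesis .
qed

lemma svd_core: "is_svd S U s V \<Longrightarrow> transpose U ** S ** V = diag_mat s"
  unfolding is_svd_def orthogonal_matrix_def
  by (metis matrix_mul_assoc matrix_mul_lid matrix_mul_rid)

lemma trace_le:
  assumes "is_svd S U s V"
  shows "(\<Sum>l\<in>UNIV. S$l$l) \<le> (\<Sum>k\<in>UNIV. s$k)"
proof -
  have U: "orthogonal_matrix U" and V: "orthogonal_matrix V" and sp: "\<And>k. 0 \<le> s$k"
    and S: "S = U ** diag_mat s ** transpose V" using assms unfolding is_svd_def by auto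
  have "(\<Sum>l\<in>UNIV. S$l$l) = (\<Sum>l\<in>UNIV. \<Sum>k\<in>UNIV. U$l$k * s$k * V$l$k)"
    unfolding S diag_entry ..
  also have "\<dots> = (\<Sum>k\<in>UNIV. s$k * (column k U \<bullet> column k V))"
    by (subst sum.swap) (simp add: inner_vec_def column_def sum_distrib_left mult_ac)
  also have "\<dots> \<le> (\<Sum>k\<in>UNIV. s$k * 1)"
  proof (rule sum_mono, rule mult_left_mono[OF _ sp])
    fix k
    have "column k U \<bullet> column k V \<le> norm (column k U) * norm (column k V)"
      by (rule norm_cauchy_schwarz)
    then show "column k U \<bullet> column k V \<le> 1"
      using U V unfolding orthogonal_matrix_orthonormal_columns by simp
  qed
  finally show ?thesis by simp
qed

lemma final_arith:
  fixes M T S :: real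
  assumes "M \<ge> 1" "T \<le> S" "S \<ge> 0" "2 * M - 2 * T \<ge> 0"
  shows "S / M \<ge> 1 - sqrt (M * (2 * M - 2 * T))"
proof -
  define x where "x = 1 - T / M"
  have Mp: "M > 0" using assms by simp
  have x0: "x \<ge> 0" using assms Mp unfolding x_def by (simp add: field_simps)
  have e: "M * (2 * M - 2 * T) = 2 * M\<^sup>2 * x" unfolding x_def using Mp
    by (simp add: field_simps power2_eq_square)
  have M2: "M\<^sup>2 \<ge> 1" using assms by (simp add: one_le_power)
  show ?thesis
  proof (cases "x \<le> 1")
    case True
    have "x\<^sup>2 \<le> 2 * M\<^sup>2 * x"
    proof -
      have "x\<^sup>2 \<le> x" using True x0 by (simp add: power2_eq_square mult_le_one mult_left_le)
      also have "x \<le> 2 * M\<^sup>2 * x" using mult_right_mono[OF M2 x0] x0 by simp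
      finally show ?thesis .
    qed
    then have "x \<le> sqrt (M * (2 * M - 2 * T))" unfolding e by (rule real_le_rsqrt)
    moreover have "S / M \<ge> T / M" using assms Mp by (simp add: divide_right_mono)
    ultimately show ?thesis unfolding x_def by simp
  next
    case False
    have "1 * x \<le> M\<^sup>2 * x" using M2 x0 by (rule mult_right_mono)
    then have "1 \<le> 2 * (M\<^sup>2 * x)" using False by linarith
    then have "1 \<le> 2 * M\<^sup>2 * x" by (simp add: mult.assoc)
    then have "1 \<le> sqrt (M * (2 * M - 2 * T))" unfolding e by (simp add: real_le_rsqrt)
    moreover have "S / M \<ge> 0" using assms Mp by simp
    ultimately show ?thesis by linarith
  qed
qed

theorem mainTheorem9:
  fixes p :: "'a measure" and z w :: "'a \<Rightarrow> real^'n"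
  assumes "prob_space p"
    and "\<And>i. (\<lambda>\<omega>. z \<omega> $ i) \<in> borel_measurable p"
    and "\<And>i. (\<lambda>\<omega>. w \<omega> $ i) \<in> borel_measurable p"
    and "\<And>i. integrable p (\<lambda>\<omega>. (z \<omega> $ i)\<^sup>2)"
    and "\<And>i. integrable p (\<lambda>\<omega>. (w \<omega> $ i)\<^sup>2)"
    and "\<And>i. var p (\<lambda>\<omega>. z \<omega> $ i) > 0"
    and "\<And>i. var p (\<lambda>\<omega>. w \<omega> $ i) > 0"
    and "rank (cross_cov p (standardize p z) (standardize p z)) = CARD('n)"
    and "rank (cross_cov p (standardize p z) (standardize p w)) = CARD('n)"
  shows "m_SVD p z w \<ge> 1 - sqrt (real CARD('n) *
           (\<Sum>l\<in>UNIV. var p (\<lambda>\<omega>. standardize p z \<omega> $ l - standardize p w \<omega> $ l)))"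
proof -
  interpret P: prob_space p by (rule assms(1))
  define z' where "z' = standardize p z"
  define w' where "w' = standardize p w"
  define Sg where "Sg = cross_cov p z' w'"
  define M where "M = real CARD('n)"
  have Lz: "L2rv p (\<lambda>\<omega>. z \<omega> $ i)" for i using assms(2,4) unfolding L2rv_def by auto
  have Lw: "L2rv p (\<lambda>\<omega>. w \<omega> $ i)" for i using assms(3,5) unfolding L2rv_def by auto
  have std: "(\<lambda>\<omega>. standardize p x \<omega> $ i) = (\<lambda>\<omega>. (1 / sqrt (var p (\<lambda>\<eta>. x \<eta> $ i))) * x \<omega> $ i
       + (- mean p (\<lambda>\<eta>. x \<eta> $ i) / sqrt (var p (\<lambda>\<eta>. x \<eta> $ i))))" for x :: "'a \<Rightarrow> real^'n" and i
    by (simp add: standardize_def fun_eq_iff diff_divide_distrib)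
  have Lz': "L2rv p (\<lambda>\<omega>. z' \<omega> $ i)" for i unfolding z'_def std by (rule P.L2_affine[OF Lz])
  have Lw': "L2rv p (\<lambda>\<omega>. w' \<omega> $ i)" for i unfolding w'_def std by (rule P.L2_affine[OF Lw])
  have var1: "var p (\<lambda>\<omega>. standardize p x \<omega> $ i) = 1"
    if "L2rv p (\<lambda>\<omega>. x \<omega> $ i)" "var p (\<lambda>\<omega>. x \<omega> $ i) > 0" for x :: "'a \<Rightarrow> real^'n" and i
  proof -
    have "var p (\<lambda>\<omega>. standardize p x \<omega> $ i)
        = (1 / sqrt (var p (\<lambda>\<eta>. x \<eta> $ i))) * (1 / sqrt (var p (\<lambda>\<eta>. x \<eta> $ i))) * var p (\<lambda>\<eta>. x \<eta> $ i)"
      unfolding var_def std by (rule P.cov_affine[OF that(1) that(1)])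
    also have "\<dots> = 1"
    proof -
      have "sqrt (var p (\<lambda>\<eta>. x \<eta> $ i)) * sqrt (var p (\<lambda>\<eta>. x \<eta> $ i)) = var p (\<lambda>\<eta>. x \<eta> $ i)"
        using that(2) by simp
      then show ?thesis using that(2) by (simp add: field_simps)
    qed
    finally show ?thesis .
  qed
  have vz: "var p (\<lambda>\<omega>. z' \<omega> $ i) = 1" for i unfolding z'_def by (rule var1[OF Lz assms(6)])
  have vw: "var p (\<lambda>\<omega>. w' \<omega> $ i) = 1" for i unfolding w'_def by (rule var1[OF Lw assms(7)])
  have varsum: "(\<Sum>l\<in>UNIV. var p (\<lambda>\<omega>. z' \<omega> $ l - w' \<omega> $ l)) = 2 * M - 2 * (\<Sum>l\<in>UNIV. Sg$l$l)"
  proof -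
    have "(\<Sum>l\<in>UNIV. var p (\<lambda>\<omega>. z' \<omega> $ l - w' \<omega> $ l)) = (\<Sum>l\<in>UNIV. 2 - 2 * Sg$l$l)"
      by (rule sum.cong[OF refl]) (simp add: P.var_diff[OF Lz' Lw'] vz vw Sg_def cross_cov_def)
    also have "\<dots> = 2 * M - 2 * (\<Sum>l\<in>UNIV. Sg$l$l)"
      by (simp add: sum_subtractf sum_distrib_left M_def)
    finally show ?thesis .
  qed
  have vnn: "2 * M - 2 * (\<Sum>l\<in>UNIV. Sg$l$l) \<ge> 0"
    unfolding varsum[symmetric] by (rule sum_nonneg) (rule P.var_nonneg)
  have ex: "\<exists>x. (case x of (U, V) \<Rightarrow> \<exists>s. is_svd Sg U s V)" using svd_exists[of Sg] by auto
  define UV where "UV = (SOME x. case x of (U, V) \<Rightarrow> \<exists>s. is_svd Sg U s V)"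
  obtain U V where UV: "UV = (U, V)" by (cases UV)
  have "\<exists>s. is_svd Sg U s V" using someI_ex[OF ex] unfolding UV_def[symmetric] UV by simp
  then obtain s where svd: "is_svd Sg U s V" by blast
  have mform: "m_SVD p z w = (1 / M) * (\<Sum>i\<in>UNIV. cov p (\<lambda>\<omega>. column i U \<bullet> z' \<omega>) (\<lambda>\<omega>. column i V \<bullet> w' \<omega>))"
  proof -
    have "m_SVD p z w = (1 / M) * (\<Sum>i\<in>UNIV. cov p (\<lambda>\<omega>. column i (fst UV) \<bullet> z' \<omega>) (\<lambda>\<omega>. column i (snd UV) \<bullet> w' \<omega>))"
      unfolding m_SVD_def UV_def Sg_def z'_def w'_def M_def by (simp add: Let_def split_beta)
    then show ?thesis unfolding UV by simp
  qed
  have covi: "cov p (\<lambda>\<omega>. column i U \<bullet> z' \<omega>) (\<lambda>\<omega>. column i V \<bullet> w' \<omega>) = s $ i" for i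
  proof -
    have "cov p (\<lambda>\<omega>. column i U \<bullet> z' \<omega>) (\<lambda>\<omega>. column i V \<bullet> w' \<omega>)
        = cov p (\<lambda>\<omega>. \<Sum>a\<in>UNIV. U$a$i * z' \<omega> $ a) (\<lambda>\<omega>. \<Sum>b\<in>UNIV. V$b$i * w' \<omega> $ b)"
      by (simp add: inner_vec_def column_def mult.commute)
    also have "\<dots> = (\<Sum>a\<in>UNIV. \<Sum>b\<in>UNIV. U$a$i * V$b$i * Sg$a$b)"
      unfolding Sg_def cross_cov_def using Lz' Lw' by (simp add: P.cov_sum)
    also have "\<dots> = (transpose U ** Sg ** V) $ i $ i"
      unfolding quad_entry by (simp add: mult_ac)
    also have "\<dots> = s $ i" using svd_core[OF svd] by (simp add: diag_mat_def)
    finally show ?thesis .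
  qed
  have mS: "m_SVD p z w = (\<Sum>i\<in>UNIV. s $ i) / M" unfolding mform covi by simp
  have spos: "(\<Sum>i\<in>UNIV. s $ i) \<ge> 0" using svd unfolding is_svd_def by (simp add: sum_nonneg)
  have M1: "M \<ge> 1" unfolding M_def by simp
  have "(\<Sum>i\<in>UNIV. s $ i) / M \<ge> 1 - sqrt (M * (2 * M - 2 * (\<Sum>l\<in>UNIV. Sg$l$l)))"
    by (rule final_arith[OF M1 trace_le[OF svd] spos vnn])
  then show ?thesis
    unfolding mS varsum[symmetric] by (simp add: z'_def w'_def M_def)
qed

end
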